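(* Let $\mathbf{X}=\{\mathbf{x}\in\mathbb{R}^n:0\le g^{\mathbf{X}}_i(\mathbf{x})\le1,\ i=1,\dots,p\}\subseteq[0,1]^n$ be a compact basic semialgebraic set, where $g^{\mathbf{X}}_1,\dots,g^{\mathbf{X}}_p\in\mathbb{R}[\mathbf{x}]$ and the coordinate polynomials $x_1,\dots,x_n$ are among the $g^{\mathbf{X}}_i$. Let $f\in\mathbb{R}[\mathbf{x}]$ have degree $d$, let $s_1,\dots,s_m\in\mathbb{R}[\mathbf{x}]$ be the polynomials $s_j(\mathbf{x})=\frac{\partial r}{\partial e_j}(\mathbf{x},\mathbf{0})$ arising from its roundoff error $r$, let $l'(\mathbf{x},\mathbf{e})=\sum_{j=1}^m s_j(\mathbf{x})e_j$, and $\mathbf{K}=\mathbf{X}\times[-1,1]^m$. For $k\ge d+1$ let $\underline{l}'_k:=\sup\{t\in\mathbb{R}: l'-t\in\mathcal{H}_k(\mathbf{K})\}$ and $\overline{l}'_k:=\inf\{t\in\mathbb{R}: t-l'\in\mathcal{H}_k(\mathbf{K})\}$. Then $(\underline{l}'_k)_{k\ge d+1}$ is nondecreasing and converges to $\underline{l}':=\min_{\mathbf{K}}l'$, and $(\overline{l}'_k)_{k\ge d+1}$ is nonincreasing and converges to $\overline{l}':=\max_{\mathbf{K}}l'$, as $k\to+\infty$. Consequently, for a machine precision $\varepsilon>0$, the intervals $I^l_k:=[\varepsilon\underline{l}'_k,\varepsilon\overline{l}'_k]$ converge to $[\underline{l},\overline{l}]$, where $\underline{l}$ and $\overline{l}$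 are the minimum and maximum of $l(\mathbf{x},\mathbf{e})=\sum_j s_j(\mathbf{x})e_j$ over $\mathbf{X}\times[-\varepsilon,\varepsilon]^m$.
   Context: Roundoff setting: $f$ is implemented in floating point; under the simple rounding model one introduces error variables $e_1,\dots,e_m$ (one per variable, constant and arithmetic operation), giving a rounded polynomial expression $\hat f(\mathbf{x},\mathbf{e})$ with $\hat f(\mathbf{x},\mathbf{0})=f(\mathbf{x})$ and $|e_j|\le\varepsilon$; $r=\hat f-f$; $l'$ is the linear part of $r$ in $\mathbf{e}$ after dividing each $e_j$ by $\varepsilon$. Sparse Krivine–Stengle set: write $\mathbf{y}=(\mathbf{x},\mathbf{e})\in\mathbb{R}^{n+m}$, $g_i(\mathbf{y})=g^{\mathbf{X}}_i(\mathbf{x})$ for $i\le p$, $g_{p+j}(\mathbf{y})=\frac12+\frac{e_j}{2}$ for $j\le m$, so $\mathbf{K}=\{\mathbf{y}:0\le g_i(\mathbf{y})\le1,\ i=1,\dots,p+m\}$. For $j=1,\dots,m$ let $J_j=\{1,\dots,p,p+j\}$ and for $\boldsymbol{\alpha},\boldsymbol{\beta}\in\mathbb{N}^{J_j}$ let $h^{(j)}_{\boldsymbol{\alpha},\boldsymbol{\beta}}=\prod_{i\in J_j}g_i^{\alpha_i}(1-g_i)^{\beta_i}$. $\mathcal{H}_k(\mathbf{K})$ is the set of polynomials of the form $\sum_{j=1}^m\sum_{|\boldsymbol{\alpha}+\boldsymbol{\beta}|\le k}\lambda^{(j)}_{\boldsymbol{\alpha},\boldsymbol{\beta}}h^{(j)}_{\boldsymbol{\alpha},\boldsymbol{\beta}}$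 with all $\lambda^{(j)}_{\boldsymbol{\alpha},\boldsymbol{\beta}}\ge0$ (finitely many terms), where $|\boldsymbol{\alpha}|=\sum_i\alpha_i$. *)

theory Defs
  imports "HOL-Analysis.Analysis"
begin

definition mpoly_eval :: "(('n::finite \<Rightarrow> nat) \<Rightarrow> real) \<Rightarrow> real^'n \<Rightarrow> real" where
  "mpoly_eval c x = (\<Sum>a\<in>{a. c a \<noteq> 0}. c a * (\<Prod>i\<in>UNIV. (x $ i) ^ a i))"

definition poly_fun_deg :: "nat \<Rightarrow> (real^'n::finite \<Rightarrow> real) \<Rightarrow> bool" where
  "poly_fun_deg d f \<longleftrightarrow> (\<exists>c. finite {a. c a \<noteq> 0} \<and>
      (\<forall>a. c a \<noteq> 0 \<longrightarrow> (\<Sum>i\<in>UNIV. a i) \<le> d) \<and> f = mpoly_eval c)"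

definition poly_fun :: "(real^'n::finite \<Rightarrow> real) \<Rightarrow> bool" where
  "poly_fun f \<longleftrightarrow> (\<exists>d. poly_fun_deg d f)"

text \<open>An index (j, alpha, a0, beta, b0) stands for
  h^(j)_{alpha,beta} with J_j = {1..p, p+j}: alpha, beta give the exponents on the
  g_i (i in 'p) and a0, b0 the exponents on g_{p+j}(y) = 1/2 + e_j/2.\<close>

type_synonym ('m, 'p) ks_index = "'m \<times> ('p \<Rightarrow> nat) \<times> nat \<times> ('p \<Rightarrow> nat) \<times> nat"

definition ks_gen :: "('p::finite \<Rightarrow> real^'n::finite \<Rightarrow> real) \<Rightarrow> ('m::finite, 'p) ks_index
     \<Rightarrow> (real^'n) \<times> (real^'m) \<Rightarrow> real" where
  "ks_gen g idx y = (case idx of (j, \<alpha>, a0, \<beta>, b0) \<Rightarrow>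
      (\<Prod>i\<in>UNIV. g i (fst y) ^ \<alpha> i * (1 - g i (fst y)) ^ \<beta> i)
      * (1/2 + snd y $ j / 2) ^ a0 * (1 - (1/2 + snd y $ j / 2)) ^ b0)"

definition ks_deg :: "('m::finite, 'p::finite) ks_index \<Rightarrow> nat" where
  "ks_deg idx = (case idx of (j, \<alpha>, a0, \<beta>, b0) \<Rightarrow>
      (\<Sum>i\<in>UNIV. \<alpha> i) + a0 + (\<Sum>i\<in>UNIV. \<beta> i) + b0)"

text \<open>H_k(K): nonnegative combinations of generators of degree at most k
  (identity of polynomial functions on all of R^(n+m)).\<close>
definition HK :: "('p::finite \<Rightarrow> real^'n::finite \<Rightarrow> real) \<Rightarrow> nat
     \<Rightarrow> ((real^'n) \<times> (real^'m::finite) \<Rightarrow> real) set" where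
  "HK g k = {F. \<exists>S c. finite S \<and> (\<forall>s\<in>S. ks_deg s \<le> k \<and> c s \<ge> 0) \<and>
                  F = (\<lambda>y. \<Sum>s\<in>S. c s * ks_gen g s y)}"

end

theory Submission
  imports Defs
begin

inductive pf :: "(real^'v::finite \<Rightarrow> real) \<Rightarrow> bool" where
  pf_const: "pf (\<lambda>z. c)"
| pf_var: "pf (\<lambda>z. z $ v)"
| pf_add: "pf f \<Longrightarrow> pf g \<Longrightarrow> pf (\<lambda>z. f z + g z)"
| pf_mult: "pf f \<Longrightarrow> pf g \<Longrightarrow> pf (\<lambda>z. f z * g z)"

lemma pf_minus: "pf f \<Longrightarrow> pf (\<lambda>z. - f z)"
  using pf_mult[OF pf_const[of "-1"]] by simp

lemma pf_diff: "pf f \<Longrightarrow> pf g \<Longrightarrow> pf (\<lambda>z. f z - g z)"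
  using pf_add[OF _ pf_minus] by simp

lemma pf_pow: "pf f \<Longrightarrow> pf (\<lambda>z. f z ^ n)"
  by (induction n) (auto intro: pf_const pf_mult)

lemma pf_sum: "(\<And>a. a \<in> A \<Longrightarrow> pf (f a)) \<Longrightarrow> pf (\<lambda>z. \<Sum>a\<in>A. f a z)"
proof (cases "finite A")
  case True
  then show "(\<And>a. a \<in> A \<Longrightarrow> pf (f a)) \<Longrightarrow> ?thesis"
    by (induction A rule: finite_induct) (auto intro: pf_const pf_add)
qed (simp add: pf_const)

lemma pf_prod: "(\<And>a. a \<in> A \<Longrightarrow> pf (f a)) \<Longrightarrow> pf (\<lambda>z. \<Prod>a\<in>A. f a z)"
proof (cases "finite A")
  case True
  then show "(\<And>a. a \<in> A \<Longrightarrow> pf (f a)) \<Longrightarrow> ?thesis"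
    by (induction A rule: finite_induct) (auto intro: pf_const pf_mult)
qed (simp add: pf_const)

lemma pf_compose: "pf Q \<Longrightarrow> (\<And>v. pf (\<lambda>z. F z $ v)) \<Longrightarrow> pf (\<lambda>z. Q (F z))"
  by (induction rule: pf.induct) (auto intro: pf_const pf_add pf_mult)

lemma pf_continuous: "pf f \<Longrightarrow> continuous_on UNIV f"
  by (induction rule: pf.induct) (auto intro!: continuous_intros)

lemma rpf_compose:
  fixes h :: "real \<Rightarrow> real"
  shows "real_polynomial_function h \<Longrightarrow> pf F \<Longrightarrow> pf (\<lambda>z. h (F z))"
proof (induction rule: real_polynomial_function.induct)
  case (linear f)
  then obtain c where c: "f = (\<lambda>x. x * c)" using real_bounded_linear by blast
  show ?case unfolding c using pf_mult[OF linear(2) pf_const] .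
qed (auto intro: pf_const pf_add pf_mult)

lemma mpoly_pf: "finite {a. c a \<noteq> 0} \<Longrightarrow> pf (mpoly_eval c)"
  unfolding mpoly_eval_def
  by (intro pf_sum pf_mult pf_const pf_prod pf_pow pf_var)

lemma poly_fun_pf: "poly_fun f \<Longrightarrow> pf f"
  unfolding poly_fun_def poly_fun_deg_def using mpoly_pf by blast

lemma poly_fun_deg_pf: "poly_fun_deg d f \<Longrightarrow> pf f"
  unfolding poly_fun_deg_def using mpoly_pf by blast

definition mono_eval :: "('v::finite \<Rightarrow> nat) \<Rightarrow> real^'v \<Rightarrow> real" where
  "mono_eval r z = (\<Prod>v\<in>UNIV. (z $ v) ^ r v)"

definition repr :: "(real \<times> ('v::finite \<Rightarrow> nat)) list \<Rightarrow> real^'v \<Rightarrow> real" where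
  "repr L z = (\<Sum>p\<leftarrow>L. fst p * mono_eval (snd p) z)"

definition mulL :: "(real \<times> ('v \<Rightarrow> nat)) list \<Rightarrow> (real \<times> ('v \<Rightarrow> nat)) list \<Rightarrow> (real \<times> ('v \<Rightarrow> nat)) list" where
  "mulL L1 L2 = concat (map (\<lambda>p. map (\<lambda>q. (fst p * fst q, \<lambda>v. snd p v + snd q v)) L2) L1)"

lemma mono_eval_add: "mono_eval (\<lambda>v. r1 v + r2 v) z = mono_eval r1 z * mono_eval r2 z"
  unfolding mono_eval_def by (simp add: power_add prod.distrib)

lemma repr_mulL: "repr (mulL L1 L2) z = repr L1 z * repr L2 z"
proof (induction L1)
  case Nil
  then show ?case by (simp add: repr_def mulL_def)
next
  case (Cons p L1)
  have "repr (map (\<lambda>q. (fst p * fst q, \<lambda>v. snd p v + snd q v)) L2) z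
        = fst p * mono_eval (snd p) z * repr L2 z"
    by (induction L2) (simp_all add: repr_def mono_eval_add algebra_simps)
  then show ?case using Cons by (simp add: mulL_def repr_def algebra_simps)
qed

lemma pf_repr: "pf P \<Longrightarrow> \<exists>L. P = repr L"
proof (induction rule: pf.induct)
  case (pf_const c)
  show ?case by (rule exI[of _ "[(c, \<lambda>v. 0)]"]) (simp add: repr_def mono_eval_def)
next
  case (pf_var v)
  have "mono_eval (\<lambda>w. if w = v then 1 else 0) z = z $ v" for z :: "real^'a"
  proof -
    have "mono_eval (\<lambda>w. if w = v then 1 else 0) z = (\<Prod>w\<in>UNIV. if w = v then z $ w else 1)"
      unfolding mono_eval_def by (rule prod.cong) auto
    also have "\<dots> = z $ v" by (subst prod.delta) auto
    finally show ?thesis .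
  qed
  then show ?case by (intro exI[of _ "[(1, \<lambda>w. if w = v then 1 else 0)]"]) (simp add: repr_def fun_eq_iff)
next
  case (pf_add f g)
  then obtain L1 L2 where "f = repr L1" "g = repr L2" by blast
  then show ?case by (intro exI[of _ "L1 @ L2"]) (simp add: repr_def fun_eq_iff)
next
  case (pf_mult f g)
  then obtain L1 L2 where "f = repr L1" "g = repr L2" by blast
  then show ?case by (intro exI[of _ "mulL L1 L2"]) (simp add: repr_mulL fun_eq_iff)
qed

lemma bern1:
  fixes y :: real
  assumes "r \<le> k"
  shows "(\<Sum>a\<le>k. real (a choose r) * (real (k choose a) * y ^ a * (1 - y) ^ (k - a)))
         = real (k choose r) * y ^ r"
proof -
  let ?f = "\<lambda>a. real (a choose r) * (real (k choose a) * y ^ a * (1 - y) ^ (k - a))"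
  have "(\<Sum>a\<le>k. ?f a) = (\<Sum>a\<in>{r..k}. ?f a)"
  proof (rule sum.mono_neutral_right)
    show "\<forall>i\<in>{..k} - {r..k}. ?f i = 0" by (auto simp: binomial_eq_0)
  qed auto
  also have "\<dots> = (\<Sum>a\<in>{r..k}. real (k choose r) * (real ((k - r) choose (a - r)) * y ^ a * (1 - y) ^ (k - a)))"
  proof (rule sum.cong[OF refl])
    fix a assume a: "a \<in> {r..k}"
    have "(k choose a) * (a choose r) = (k choose r) * ((k - r) choose (a - r))"
      using choose_mult[of r a k] a by auto
    then have "real (k choose a) * real (a choose r) = real (k choose r) * real ((k - r) choose (a - r))"
      by (metis of_nat_mult)
    then show "?f a = real (k choose r) * (real ((k - r) choose (a - r)) * y ^ a * (1 - y) ^ (k - a))"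
      by (simp add: algebra_simps)
  qed
  also have "\<dots> = (\<Sum>b\<in>{0..k-r}. real (k choose r) * (real ((k - r) choose b) * y ^ (b + r) * (1 - y) ^ (k - r - b)))"
  proof -
    have "{r..k} = {0 + r..(k - r) + r}" using assms by simp
    then show ?thesis
      by (simp only: sum.shift_bounds_cl_nat_ivl) (intro sum.cong refl, auto simp: algebra_simps)
  qed
  also have "\<dots> = real (k choose r) * y ^ r * (\<Sum>b\<le>k-r. real ((k - r) choose b) * y ^ b * (1 - y) ^ (k - r - b))"
    by (simp add: sum_distrib_left atLeast0AtMost power_add algebra_simps)
  also have "(\<Sum>b\<le>k-r. real ((k - r) choose b) * y ^ b * (1 - y) ^ (k - r - b)) = (y + (1 - y)) ^ (k - r)"
    by (rule binomial_ring[symmetric])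
  finally show ?thesis by simp
qed

definition wB :: "nat \<Rightarrow> nat \<Rightarrow> nat \<Rightarrow> real" where
  "wB k r a = real (a choose r) / real (k choose r)"

definition bb :: "nat \<Rightarrow> nat \<Rightarrow> real \<Rightarrow> real" where
  "bb k a y = real (k choose a) * y ^ a * (1 - y) ^ (k - a)"

lemma bern1': "r \<le> k \<Longrightarrow> y ^ r = (\<Sum>a\<le>k. wB k r a * bb k a y)"
proof -
  assume rk: "r \<le> k"
  have pos: "real (k choose r) > 0" using rk by simp
  have "(\<Sum>a\<le>k. wB k r a * bb k a y) = (\<Sum>a\<le>k. real (a choose r) * (real (k choose a) * y ^ a * (1 - y) ^ (k - a))) / real (k choose r)"
    unfolding wB_def bb_def sum_divide_distrib by (intro sum.cong refl) auto
  also have "\<dots> = y ^ r" using bern1[OF rk, of y] pos by simp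
  finally show ?thesis by simp
qed

lemma binom_step: "real (n choose Suc k) = real (n choose k) * real (n - k) / real (Suc k)"
proof -
  have "Suc k * (n choose Suc k) = (n - k) * (n choose k)"
    using binomial_absorption[of k n] binomial_absorb_comp[of n k] by simp
  then have "real (Suc k) * real (n choose Suc k) = real (n - k) * real (n choose k)"
    by (metis of_nat_mult)
  then show ?thesis by (simp add: field_simps)
qed

lemma wB_step:
  assumes "Suc r \<le> k"
  shows "wB k (Suc r) a = wB k r a * (real (a - r) / real (k - r))"
proof -
  have p1: "real (k choose r) > 0" using assms by simp
  have p2: "real (k - r) > 0" using assms by simp
  have gen: "\<And>A B C D S::real. S \<noteq> 0 \<Longrightarrow> C \<noteq> 0 \<Longrightarrow> D \<noteq> 0 \<Longrightarrow> A * B / S / (C * D / S) = A / C * (B / D)"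
    by (simp add: field_simps)
  show ?thesis unfolding wB_def binom_step
    by (rule gen) (use p1 p2 in auto)
qed

lemma wB_bound:
  assumes "0 < k" "r \<le> k" "a \<le> k"
  shows "0 \<le> wB k r a \<and> wB k r a \<le> 1 \<and> \<bar>wB k r a - (real a / real k) ^ r\<bar> \<le> real r ^ 2 / real k"
  using assms(2)
proof (induction r)
  case 0
  then show ?case by (simp add: wB_def)
next
  case (Suc r)
  let ?A = "real a / real k"
  have kpos: "real k > 0" using assms by simp
  have A0: "0 \<le> ?A" and A1: "?A \<le> 1" using assms by auto
  from Suc have IH: "0 \<le> wB k r a" "wB k r a \<le> 1" "\<bar>wB k r a - ?A ^ r\<bar> \<le> real r ^ 2 / real k" by auto
  have step: "wB k (Suc r) a = wB k r a * (real (a - r) / real (k - r))"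
    using wB_step Suc by blast
  have Ar: "0 \<le> ?A ^ r" "?A ^ r \<le> 1" using A0 A1 by (auto simp: power_le_one)
  show ?case
  proof (cases "r \<le> a")
    case True
    define f where "f = real (a - r) / real (k - r)"
    have krpos: "real k - real r > 0" using Suc by simp
    have fdef: "f = (real a - real r) / (real k - real r)"
      using True Suc by (simp add: f_def of_nat_diff)
    have f0: "0 \<le> f" and f1: "f \<le> 1" using True krpos assms(3) by (auto simp: fdef field_simps)
    have "f - ?A = - (real r * (real k - real a)) / ((real k - real r) * real k)"
      using krpos kpos by (simp add: fdef field_simps)
    then have "\<bar>f - ?A\<bar> = real r * (real k - real a) / ((real k - real r) * real k)"
      using krpos kpos assms(3) by (simp add: abs_div abs_mult)
    also have "\<dots> \<le> real r * (real k - real r) / ((real k - real r) * real k)"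
      using krpos kpos True
      by (intro divide_right_mono mult_left_mono) auto
    also have "\<dots> = real r / real k" using krpos by simp
    finally have fA: "\<bar>f - ?A\<bar> \<le> real r / real k" .
    have "wB k (Suc r) a - ?A ^ Suc r = (wB k r a - ?A ^ r) * f + ?A ^ r * (f - ?A)"
      using step by (simp add: f_def algebra_simps)
    then have "\<bar>wB k (Suc r) a - ?A ^ Suc r\<bar> \<le> \<bar>wB k r a - ?A ^ r\<bar> * f + ?A ^ r * \<bar>f - ?A\<bar>"
      using f0 Ar by (simp add: abs_mult abs_triangle_ineq[THEN order_trans])
    also have "\<dots> \<le> real r ^ 2 / real k * 1 + 1 * (real r / real k)"
      by (intro add_mono mult_mono IH(3) f1 fA Ar(2)) (use f0 Ar in auto)
    also have "\<dots> \<le> real (Suc r) ^ 2 / real k"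
      using kpos by (simp add: field_simps power2_eq_square)
    moreover have "wB k (Suc r) a = wB k r a * f" using step by (simp add: f_def)
    ultimately show ?thesis
      using IH(1,2) f0 f1 by (simp add: mult_le_one)
  next
    case False
    then have w0: "wB k (Suc r) a = 0" using step by simp
    have "?A ^ Suc r = ?A * ?A ^ r" by simp
    also have "\<dots> \<le> ?A * 1" by (rule mult_left_mono) (use A0 Ar in auto)
    finally have "?A ^ Suc r \<le> ?A" by simp
    also have "?A \<le> real (Suc r) ^ 2 / real k"
    proof -
      have "real a \<le> real r" using False by simp
      also have "\<dots> \<le> real (Suc r) ^ 2" by (simp add: power2_eq_square algebra_simps)
      finally have "real a \<le> real (Suc r) ^ 2" .
      then show ?thesis using kpos by (simp add: divide_right_mono)
    qed
    finally show ?thesis using w0 A0 by simp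
  qed
qed

lemma prod_diff_le:
  fixes x y :: "'a \<Rightarrow> real"
  assumes "finite S" "\<And>v. v \<in> S \<Longrightarrow> 0 \<le> x v \<and> x v \<le> 1 \<and> 0 \<le> y v \<and> y v \<le> 1"
  shows "\<bar>(\<Prod>v\<in>S. x v) - (\<Prod>v\<in>S. y v)\<bar> \<le> (\<Sum>v\<in>S. \<bar>x v - y v\<bar>)"
  using assms
proof (induction S rule: finite_induct)
  case empty
  then show ?case by simp
next
  case (insert a S)
  let ?X = "\<Prod>v\<in>S. x v" and ?Y = "\<Prod>v\<in>S. y v"
  have X: "0 \<le> ?X" "?X \<le> 1" using insert by (auto intro: prod_nonneg prod_le_1)
  have ya: "0 \<le> y a" "y a \<le> 1" using insert by auto
  have IH: "\<bar>?X - ?Y\<bar> \<le> (\<Sum>v\<in>S. \<bar>x v - y v\<bar>)" using insert by auto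
  have "x a * ?X - y a * ?Y = (x a - y a) * ?X + y a * (?X - ?Y)" by (simp add: algebra_simps)
  then have "\<bar>x a * ?X - y a * ?Y\<bar> \<le> \<bar>x a - y a\<bar> * ?X + y a * \<bar>?X - ?Y\<bar>"
    using X ya by (simp add: abs_mult abs_triangle_ineq[THEN order_trans])
  also have "\<dots> \<le> \<bar>x a - y a\<bar> * 1 + 1 * \<bar>?X - ?Y\<bar>"
    by (intro add_mono mult_mono) (use X ya in auto)
  finally show ?case using insert IH by simp
qed

lemma mono_bern:
  assumes "\<And>v. r v \<le> k"
  shows "mono_eval r z = (\<Sum>a\<in>PiE UNIV (\<lambda>_. {..k}). (\<Prod>v\<in>UNIV. wB k (r v) (a v)) * (\<Prod>v\<in>UNIV. bb k (a v) (z $ v)))"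
proof -
  have "mono_eval r z = (\<Prod>v\<in>UNIV. \<Sum>a\<in>{..k}. wB k (r v) a * bb k a (z $ v))"
    unfolding mono_eval_def using bern1' assms by (intro prod.cong refl) blast
  also have "\<dots> = (\<Sum>a\<in>PiE UNIV (\<lambda>_. {..k}). \<Prod>v\<in>UNIV. wB k (r v) (a v) * bb k (a v) (z $ v))"
    by (rule prod_sum_PiE) auto
  also have "\<dots> = (\<Sum>a\<in>PiE UNIV (\<lambda>_. {..k}). (\<Prod>v\<in>UNIV. wB k (r v) (a v)) * (\<Prod>v\<in>UNIV. bb k (a v) (z $ v)))"
    by (simp add: prod.distrib)
  finally show ?thesis .
qed

lemma sum_list_sum_swap: "(\<Sum>x\<leftarrow>xs. \<Sum>a\<in>A. f x a) = (\<Sum>a\<in>A. \<Sum>x\<leftarrow>xs. f x a)"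
  by (induction xs) (simp_all add: sum.distrib)

lemma sum_list_div: "(\<Sum>x\<leftarrow>xs. f x / c) = (\<Sum>x\<leftarrow>xs. f x) / (c::real)"
  by (induction xs) (simp_all add: add_divide_distrib)

lemma le_sum_list_map: "p \<in> set L \<Longrightarrow> (f p::nat) \<le> (\<Sum>q\<leftarrow>L. f q)"
  by (induction L) auto

lemma bernstein:
  fixes L :: "(real \<times> ('v::finite \<Rightarrow> nat)) list"
  assumes mu: "\<mu> > 0" and pos: "\<And>z. (\<forall>v. 0 \<le> z $ v \<and> z $ v \<le> 1) \<Longrightarrow> \<mu> \<le> repr L z"
  shows "\<exists>k b. (\<forall>a. 0 \<le> b a) \<and> (\<forall>z. repr L z = (\<Sum>a\<in>PiE UNIV (\<lambda>_. {..k::nat}).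
            b a * (\<Prod>v\<in>UNIV. (z $ v) ^ (a v) * (1 - z $ v) ^ (k - a v))))"
proof -
  define C0 where "C0 = (\<Sum>p\<leftarrow>L. \<bar>fst p\<bar> * (\<Sum>v\<in>UNIV. real (snd p v) ^ 2))"
  define K1 where "K1 = (\<Sum>p\<leftarrow>L. \<Sum>v\<in>UNIV. snd p v)"
  define k where "k = max (K1 + 1) (nat \<lceil>C0 / \<mu>\<rceil> + 1)"
  have kpos: "0 < k" by (simp add: k_def)
  have rk: "snd p v \<le> k" if "p \<in> set L" for p v
  proof -
    have "snd p v \<le> (\<Sum>v\<in>UNIV. snd p v)" by (rule member_le_sum) auto
    also have "\<dots> \<le> K1" unfolding K1_def using that by (rule le_sum_list_map)
    finally show ?thesis by (simp add: k_def)
  qed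
  have Ck: "C0 / real k < \<mu>"
  proof -
    have "C0 / \<mu> \<le> real (nat \<lceil>C0 / \<mu>\<rceil>)" by linarith
    also have "\<dots> < real k" by (simp add: k_def)
    finally have "C0 / \<mu> < real k" .
    then have "C0 < \<mu> * real k" using mu by (simp add: field_simps)
    then show ?thesis using kpos by (simp add: field_simps)
  qed
  define A where "A = PiE UNIV (\<lambda>_::'v. {..k})"
  define W where "W r a = (\<Prod>v\<in>UNIV. wB k (r v) (a v))" for r a :: "'v \<Rightarrow> nat"
  define b' where "b' a = (\<Sum>p\<leftarrow>L. fst p * W (snd p) a)" for a
  define b where "b a = (if a \<in> A then b' a * (\<Prod>v\<in>UNIV. real (k choose a v)) else 0)" for a
  have expand: "repr L z = (\<Sum>a\<in>A. b a * (\<Prod>v\<in>UNIV. (z $ v) ^ (a v) * (1 - z $ v) ^ (k - a v)))" for z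
  proof -
    have "repr L z = (\<Sum>p\<leftarrow>L. fst p * (\<Sum>a\<in>A. W (snd p) a * (\<Prod>v\<in>UNIV. bb k (a v) (z $ v))))"
      unfolding repr_def A_def W_def
      by (intro arg_cong[where f=sum_list] map_cong refl arg_cong[where f="\<lambda>x. _ * x"] mono_bern rk)
    also have "\<dots> = (\<Sum>a\<in>A. \<Sum>p\<leftarrow>L. fst p * W (snd p) a * (\<Prod>v\<in>UNIV. bb k (a v) (z $ v)))"
      by (simp add: sum_distrib_left sum_list_sum_swap mult.assoc)
    also have "\<dots> = (\<Sum>a\<in>A. b' a * (\<Prod>v\<in>UNIV. bb k (a v) (z $ v)))"
      unfolding b'_def by (simp add: sum_list_mult_const)
    also have "\<dots> = (\<Sum>a\<in>A. b a * (\<Prod>v\<in>UNIV. (z $ v) ^ (a v) * (1 - z $ v) ^ (k - a v)))"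
      unfolding b_def bb_def by (intro sum.cong refl) (simp add: prod.distrib mult.assoc)
    finally show ?thesis .
  qed
  have bpos: "0 \<le> b' a" if aA: "a \<in> A" for a
  proof -
    define zk where "zk = (\<chi> v. real (a v) / real k)"
    have ak: "a v \<le> k" for v using aA by (auto simp: A_def)
    have "\<mu> \<le> repr L zk"
      using ak kpos by (intro pos) (auto simp: zk_def)
    have pb: "\<bar>W (snd p) a - mono_eval (snd p) zk\<bar> \<le> (\<Sum>v\<in>UNIV. real (snd p v) ^ 2 / real k)"
      if p: "p \<in> set L" for p
    proof -
      have "\<bar>W (snd p) a - mono_eval (snd p) zk\<bar>
          = \<bar>(\<Prod>v\<in>UNIV. wB k (snd p v) (a v)) - (\<Prod>v\<in>UNIV. (real (a v) / real k) ^ (snd p v))\<bar>"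
        by (simp add: W_def mono_eval_def zk_def)
      also have "\<dots> \<le> (\<Sum>v\<in>UNIV. \<bar>wB k (snd p v) (a v) - (real (a v) / real k) ^ (snd p v)\<bar>)"
      proof (rule prod_diff_le)
        fix v
        show "0 \<le> wB k (snd p v) (a v) \<and> wB k (snd p v) (a v) \<le> 1 \<and>
          0 \<le> (real (a v) / real k) ^ snd p v \<and> (real (a v) / real k) ^ snd p v \<le> 1"
          using wB_bound[OF kpos rk[OF p] ak] ak kpos by (auto simp: power_le_one)
      qed simp
      also have "\<dots> \<le> (\<Sum>v\<in>UNIV. real (snd p v) ^ 2 / real k)"
        by (intro sum_mono) (use wB_bound[OF kpos rk[OF p] ak] in blast)
      finally show ?thesis .
    qed
    have "b' a - repr L zk = (\<Sum>p\<leftarrow>L. fst p * (W (snd p) a - mono_eval (snd p) zk))"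
      unfolding b'_def repr_def by (simp add: sum_list_subtractf[symmetric] algebra_simps)
    also have "\<dots> \<ge> - (\<Sum>p\<leftarrow>L. \<bar>fst p * (W (snd p) a - mono_eval (snd p) zk)\<bar>)"
      using sum_list_abs[of "map (\<lambda>p. fst p * (W (snd p) a - mono_eval (snd p) zk)) L"]
      by (simp add: o_def)
    finally have 1: "b' a - repr L zk \<ge> - (\<Sum>p\<leftarrow>L. \<bar>fst p * (W (snd p) a - mono_eval (snd p) zk)\<bar>)" .
    have "(\<Sum>p\<leftarrow>L. \<bar>fst p * (W (snd p) a - mono_eval (snd p) zk)\<bar>)
          \<le> (\<Sum>p\<leftarrow>L. \<bar>fst p\<bar> * (\<Sum>v\<in>UNIV. real (snd p v) ^ 2) / real k)"
    proof (rule sum_list_mono)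
      fix p assume p: "p \<in> set L"
      have "\<bar>fst p * (W (snd p) a - mono_eval (snd p) zk)\<bar> = \<bar>fst p\<bar> * \<bar>W (snd p) a - mono_eval (snd p) zk\<bar>"
        by (simp add: abs_mult)
      also have "\<dots> \<le> \<bar>fst p\<bar> * (\<Sum>v\<in>UNIV. real (snd p v) ^ 2 / real k)"
        by (intro mult_left_mono pb p) simp
      also have "\<dots> = \<bar>fst p\<bar> * (\<Sum>v\<in>UNIV. real (snd p v) ^ 2) / real k"
        unfolding sum_divide_distrib[symmetric] by simp
      finally show "\<bar>fst p * (W (snd p) a - mono_eval (snd p) zk)\<bar> \<le> \<bar>fst p\<bar> * (\<Sum>v\<in>UNIV. real (snd p v) ^ 2) / real k" .
    qed
    also have "\<dots> = C0 / real k" unfolding C0_def by (rule sum_list_div)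
    finally have 2: "(\<Sum>p\<leftarrow>L. \<bar>fst p * (W (snd p) a - mono_eval (snd p) zk)\<bar>) \<le> C0 / real k" .
    show ?thesis using 1 2 Ck \<open>\<mu> \<le> repr L zk\<close> by linarith
  qed
  have "\<forall>a. 0 \<le> b a" using bpos by (simp add: b_def prod_nonneg)
  then show ?thesis using expand unfolding A_def by blast
qed

definition cube :: "(real^'v::finite) set" where "cube = {z. \<forall>v. 0 \<le> z $ v \<and> z $ v \<le> 1}"

lemma cube_cbox: "cube = cbox 0 1"
  by (auto simp: cube_def mem_box_cart)

lemma compact_cube: "compact cube" unfolding cube_cbox by simp

lemma cube_ne: "(0::real^'v::finite) \<in> cube" by (simp add: cube_def)

lemma compact_shift:
  fixes P R :: "real^'v::finite \<Rightarrow> real"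
  assumes cP: "continuous_on UNIV P" and cR: "continuous_on UNIV R"
    and R0: "\<And>z. 0 \<le> R z" and key: "\<And>z::real^'v. z \<in> cube \<Longrightarrow> R z = 0 \<Longrightarrow> 0 < P z"
  shows "\<exists>lam \<mu>. 0 < \<mu> \<and> (\<forall>z\<in>cube. \<mu> \<le> P z + lam * R z)"
proof -
  have cPc: "continuous_on cube P" using cP continuous_on_subset by blast
  have cRc: "continuous_on cube R" using cR continuous_on_subset by blast
  obtain zm where zm: "zm \<in> cube" "\<forall>z\<in>cube. P zm \<le> P z"
    using continuous_attains_inf[OF compact_cube _ cPc] cube_ne by blast
  define M where "M = max 0 (- P zm)"
  have M: "0 \<le> M" "\<And>z. z \<in> cube \<Longrightarrow> - M \<le> P z" using zm by (auto simp: M_def)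
  obtain lam where lam: "\<forall>z\<in>cube. 0 < P z + lam * R z"
  proof (cases "cube \<inter> {z. P z \<le> 0} = {}")
    case True
    then have "\<forall>z\<in>cube. 0 < P z + 0 * R z" by force
    then show ?thesis using that by blast
  next
    case False
    have cU: "compact (cube \<inter> {z. P z \<le> 0})"
      by (intro compact_Int_closed compact_cube closed_Collect_le cP continuous_on_const)
    have cRU: "continuous_on (cube \<inter> {z. P z \<le> 0}) R" using cR continuous_on_subset by blast
    obtain z0 where z0: "z0 \<in> cube \<inter> {z. P z \<le> 0}" "\<forall>z\<in>cube \<inter> {z. P z \<le> 0}. R z0 \<le> R z"
      using continuous_attains_inf[OF cU False cRU] by blast
    have r0: "0 < R z0"
    proof (rule ccontr)
      assume "\<not> 0 < R z0"
      then have "R z0 = 0" using R0[of z0] by simp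
      then show False using key[of z0] z0(1) by auto
    qed
    define lam where "lam = (M + 1) / R z0"
    have lam0: "0 \<le> lam" using r0 M by (simp add: lam_def)
    have "\<forall>z\<in>cube. 0 < P z + lam * R z"
    proof
      fix z :: "real^'v" assume z: "z \<in> cube"
      show "0 < P z + lam * R z"
      proof (cases "P z \<le> 0")
        case True
        then have "R z0 \<le> R z" using z0(2) z by auto
        then have "lam * R z0 \<le> lam * R z" using lam0 by (simp add: mult_left_mono)
        moreover have "lam * R z0 = M + 1" using r0 by (simp add: lam_def)
        ultimately show ?thesis using M(2)[OF z] by linarith
      next
        case False
        then show ?thesis using lam0 R0[of z] by (simp add: add_pos_nonneg)
      qed
    qed
    then show ?thesis using that by blast
  qed
  have cF: "continuous_on cube (\<lambda>z. P z + lam * R z)"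
    by (intro continuous_intros cPc cRc)
  obtain z1 where z1: "z1 \<in> cube" "\<forall>z\<in>cube. P z1 + lam * R z1 \<le> P z + lam * R z"
    using continuous_attains_inf[OF compact_cube _ cF] cube_ne by blast
  show ?thesis
    by (rule exI[of _ lam], rule exI[of _ "P z1 + lam * R z1"]) (use z1 lam in auto)
qed

lemma HK_memI:
  "finite S \<Longrightarrow> (\<And>s. s \<in> S \<Longrightarrow> ks_deg s \<le> k \<and> 0 \<le> c s) \<Longrightarrow> F = (\<lambda>y. \<Sum>s\<in>S. c s * ks_gen g s y) \<Longrightarrow> F \<in> HK g k"
  unfolding HK_def by blast

lemma HK_memE:
  assumes "F \<in> HK g k"
  obtains S c where "finite S" "\<And>s. s \<in> S \<Longrightarrow> ks_deg s \<le> k \<and> 0 \<le> c s" "F = (\<lambda>y. \<Sum>s\<in>S. c s * ks_gen g s y)"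
  using assms unfolding HK_def by blast

lemma HK_zero: "(\<lambda>y. 0) \<in> HK g k"
  by (rule HK_memI[of "{}"]) auto

lemma HK_single: "ks_deg s \<le> k \<Longrightarrow> 0 \<le> c \<Longrightarrow> (\<lambda>y. c * ks_gen g s y) \<in> HK g k"
  by (rule HK_memI[of "{s}" _ "\<lambda>_. c"]) auto

lemma HK_add:
  assumes "F \<in> HK g k" "G \<in> HK g k"
  shows "(\<lambda>y. F y + G y) \<in> HK g k"
proof -
  obtain S1 c1 where 1: "finite S1" "\<And>s. s \<in> S1 \<Longrightarrow> ks_deg s \<le> k \<and> c1 s \<ge> 0" "F = (\<lambda>y. \<Sum>s\<in>S1. c1 s * ks_gen g s y)"
    by (rule HK_memE[OF assms(1)]) blast
  obtain S2 c2 where 2: "finite S2" "\<And>s. s \<in> S2 \<Longrightarrow> ks_deg s \<le> k \<and> c2 s \<ge> 0" "G = (\<lambda>y. \<Sum>s\<in>S2. c2 s * ks_gen g s y)"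
    by (rule HK_memE[OF assms(2)]) blast
  define c where "c s = (if s \<in> S1 then c1 s else 0) + (if s \<in> S2 then c2 s else 0)" for s
  have "(\<lambda>y. F y + G y) = (\<lambda>y. \<Sum>s\<in>S1 \<union> S2. c s * ks_gen g s y)"
  proof
    fix y
    have "(\<Sum>s\<in>S1 \<union> S2. c s * ks_gen g s y) =
        (\<Sum>s\<in>S1 \<union> S2. if s \<in> S1 then c1 s * ks_gen g s y else 0) +
        (\<Sum>s\<in>S1 \<union> S2. if s \<in> S2 then c2 s * ks_gen g s y else 0)"
    proof -
      have "c s * ks_gen g s y = (if s \<in> S1 then c1 s * ks_gen g s y else 0) + (if s \<in> S2 then c2 s * ks_gen g s y else 0)" for s
        by (simp add: c_def algebra_simps)
      then show ?thesis by (simp add: sum.distrib[symmetric])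
    qed
    also have "\<dots> = (\<Sum>s\<in>S1. c1 s * ks_gen g s y) + (\<Sum>s\<in>S2. c2 s * ks_gen g s y)"
      using 1(1) 2(1) by (simp add: sum.inter_restrict[symmetric] Int_absorb1 Int_absorb2)
    finally show "F y + G y = (\<Sum>s\<in>S1 \<union> S2. c s * ks_gen g s y)" using 1(3) 2(3) by simp
  qed
  moreover have "\<And>s. s \<in> S1 \<union> S2 \<Longrightarrow> ks_deg s \<le> k \<and> c s \<ge> 0" using 1(2) 2(2) by (auto simp: c_def)
  ultimately show ?thesis using 1(1) 2(1) by (intro HK_memI[of "S1 \<union> S2" _ c]) auto
qed

lemma HK_sum:
  assumes "finite A" "\<And>a. a \<in> A \<Longrightarrow> F a \<in> HK g k"
  shows "(\<lambda>y. \<Sum>a\<in>A. F a y) \<in> HK g k"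
  using assms by (induction A rule: finite_induct) (auto intro: HK_zero HK_add)

lemma HK_scale:
  assumes "0 \<le> c" "F \<in> HK g k"
  shows "(\<lambda>y. c * F y) \<in> HK g k"
proof -
  obtain S1 c1 where 1: "finite S1" "\<And>s. s \<in> S1 \<Longrightarrow> ks_deg s \<le> k \<and> c1 s \<ge> 0" "F = (\<lambda>y. \<Sum>s\<in>S1. c1 s * ks_gen g s y)"
    by (rule HK_memE[OF assms(2)]) blast
  show ?thesis
  proof (rule HK_memI[OF 1(1), of _ "\<lambda>s. c * c1 s"])
    show "\<And>s. s \<in> S1 \<Longrightarrow> ks_deg s \<le> k \<and> 0 \<le> c * c1 s" using 1(2) assms(1) by auto
    show "(\<lambda>y. c * F y) = (\<lambda>y. \<Sum>s\<in>S1. c * c1 s * ks_gen g s y)"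
      using 1(3) by (simp add: sum_distrib_left mult.assoc)
  qed
qed

lemma HK_mono:
  assumes "k \<le> k'" "F \<in> HK g k"
  shows "F \<in> HK g k'"
proof -
  obtain S c where 1: "finite S" "\<And>s. s \<in> S \<Longrightarrow> ks_deg s \<le> k \<and> 0 \<le> c s" "F = (\<lambda>y. \<Sum>s\<in>S. c s * ks_gen g s y)"
    by (rule HK_memE[OF assms(2)]) blast
  show ?thesis by (rule HK_memI[OF 1(1) _ 1(3)]) (use 1(2) assms(1) in force)
qed

lemma ks_gen_nonneg:
  assumes "\<forall>i. 0 \<le> g i x \<and> g i x \<le> 1" "\<forall>j. -1 \<le> e $ j \<and> e $ j \<le> 1"
  shows "0 \<le> ks_gen g s (x, e)"
proof -
  obtain j \<alpha> a0 \<beta> b0 where s: "s = (j, \<alpha>, a0, \<beta>, b0)" by (cases s) auto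
  have "0 \<le> 1/2 + e $ j / 2" "0 \<le> 1 - (1/2 + e $ j / 2)" using assms(2)[rule_format, of j] by auto
  then show ?thesis unfolding s ks_gen_def using assms(1)
    by (auto intro!: mult_nonneg_nonneg prod_nonneg)
qed

lemma HK_nonneg:
  assumes "F \<in> HK g k" "\<forall>i. 0 \<le> g i x \<and> g i x \<le> 1" "\<forall>j. -1 \<le> e $ j \<and> e $ j \<le> 1"
  shows "0 \<le> F (x, e)"
proof -
  obtain S1 c1 where 1: "finite S1" "\<And>s. s \<in> S1 \<Longrightarrow> ks_deg s \<le> k \<and> c1 s \<ge> 0" "F = (\<lambda>y. \<Sum>s\<in>S1. c1 s * ks_gen g s y)"
    by (rule HK_memE[OF assms(1)]) blast
  have "\<And>s. 0 \<le> ks_gen g s (x, e)" using ks_gen_nonneg assms(2,3) by blast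
  then show ?thesis unfolding 1(3)
    using 1(2) by (auto intro!: sum_nonneg)
qed

lemma prod_option: "(\<Prod>v\<in>(UNIV::'a::finite option set). f v) = f None * (\<Prod>i\<in>UNIV. f (Some i))"
proof -
  have "(UNIV::'a option set) = insert None (range Some)" by (rule UNIV_option_conv)
  then have "(\<Prod>v\<in>(UNIV::'a option set). f v) = (\<Prod>v\<in>insert None (range Some). f v)" by simp
  also have "\<dots> = f None * (\<Prod>v\<in>range Some. f v)"
    by (subst prod.insert) (auto)
  also have "(\<Prod>v\<in>range Some. f v) = (\<Prod>i\<in>UNIV. f (Some i))"
    by (subst prod.reindex) auto
  finally show ?thesis .
qed

lemma KS:
  fixes g :: "'p::finite \<Rightarrow> real^'n::finite \<Rightarrow> real" and iq :: "'n \<Rightarrow> 'p"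
    and Q :: "real^'n \<Rightarrow> real \<Rightarrow> real" and j :: "'m::finite"
  assumes gpf: "\<And>i. pf (g i)" and iq: "\<And>q. g (iq q) = (\<lambda>x. x $ q)"
    and Qpf: "pf (\<lambda>z::real^('p option). Q (\<chi> q. z $ Some (iq q)) (2 * z $ None - 1))"
    and Qpos: "\<And>x e. (\<forall>i. 0 \<le> g i x \<and> g i x \<le> 1) \<Longrightarrow> -1 \<le> e \<Longrightarrow> e \<le> 1 \<Longrightarrow> 0 < Q x e"
  shows "\<exists>k. (\<lambda>y. Q (fst y) (snd y $ j)) \<in> (HK g k :: ((real^'n) \<times> (real^'m) \<Rightarrow> real) set)"
proof -
  define Xz where "Xz z = (\<chi> q. z $ Some (iq q))" for z :: "real^('p option)"
  define P where "P z = Q (Xz z) (2 * z $ None - 1)" for z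
  define R where "R z = (\<Sum>i\<in>UNIV. (z $ Some i - g i (Xz z)) ^ 2)" for z
  have pP: "pf P" using Qpf unfolding P_def Xz_def .
  have pX: "pf (\<lambda>z. Xz z $ q)" for q unfolding Xz_def by (simp add: pf_var)
  have pR: "pf R" unfolding R_def
    by (intro pf_sum pf_pow pf_diff pf_var pf_compose[OF gpf] pX)
  have R0: "0 \<le> R z" for z unfolding R_def by (simp add: sum_nonneg)
  have key: "0 < P z" if z: "z \<in> cube" and Rz: "R z = 0" for z
  proof -
    have "\<forall>i\<in>UNIV. (z $ Some i - g i (Xz z)) ^ 2 = 0"
      using Rz unfolding R_def by (subst sum_nonneg_eq_0_iff[symmetric]) auto
    then have zi: "z $ Some i = g i (Xz z)" for i by auto
    have "0 \<le> g i (Xz z) \<and> g i (Xz z) \<le> 1" for i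
    proof -
      have "0 \<le> z $ Some i \<and> z $ Some i \<le> 1" using z unfolding cube_def by blast
      then show ?thesis unfolding zi .
    qed
    moreover have "-1 \<le> 2 * z $ None - 1" "2 * z $ None - 1 \<le> 1" using z by (auto simp: cube_def)
    ultimately show ?thesis unfolding P_def by (intro Qpos) auto
  qed
  obtain lam \<mu> where mu: "0 < \<mu>" "\<forall>z\<in>cube. \<mu> \<le> P z + lam * R z"
    using compact_shift[OF pf_continuous[OF pP] pf_continuous[OF pR] R0 key] by blast
  have "pf (\<lambda>z. P z + lam * R z)" by (intro pf_add pf_mult pf_const pP pR)
  then obtain L where L: "(\<lambda>z. P z + lam * R z) = repr L" using pf_repr by blast
  have "\<And>z. (\<forall>v. 0 \<le> z $ v \<and> z $ v \<le> 1) \<Longrightarrow> \<mu> \<le> repr L z"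
    using mu(2) unfolding cube_def L[symmetric] by auto
  then obtain k b where kb: "\<forall>a. 0 \<le> b a" "\<forall>z. repr L z = (\<Sum>a\<in>PiE UNIV (\<lambda>_. {..k::nat}).
            b a * (\<Prod>v\<in>UNIV. (z $ v) ^ (a v) * (1 - z $ v) ^ (k - a v)))"
    using bernstein[OF mu(1)] by blast
  define A where "A = PiE (UNIV :: 'p option set) (\<lambda>_. {..k})"
  define idx where "idx a = (j, \<lambda>i. a (Some i), a None, \<lambda>i. k - a (Some i), k - a None)"
    for a :: "'p option \<Rightarrow> nat"
  define D where "D = 2 * CARD('p) * k + 2 * k"
  have deg: "ks_deg (idx a) \<le> D" if a: "a \<in> A" for a
  proof -
    have ak: "a v \<le> k" for v using a by (auto simp: A_def)
    have "(\<Sum>i\<in>UNIV. a (Some i)) \<le> (\<Sum>i\<in>(UNIV::'p set). k)" by (intro sum_mono ak)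
    moreover have "(\<Sum>i\<in>UNIV. k - a (Some i)) \<le> (\<Sum>i\<in>(UNIV::'p set). k)" by (intro sum_mono) simp
    ultimately show ?thesis using ak[of None] unfolding ks_deg_def idx_def D_def by simp
  qed
  have rep: "Q x (e $ j) = (\<Sum>a\<in>A. b a * ks_gen g (idx a) (x, e))" for x e
  proof -
    define z0 where "z0 = (\<chi> v. case v of Some i \<Rightarrow> g i x | None \<Rightarrow> 1/2 + e $ j / 2)"
    have Xz0: "Xz z0 = x" unfolding Xz_def z0_def by (simp add: vec_eq_iff iq)
    have "R z0 = 0" unfolding R_def Xz0 by (simp add: z0_def)
    moreover have "P z0 = Q x (e $ j)" unfolding P_def Xz0 by (simp add: z0_def)
    ultimately have "Q x (e $ j) = repr L z0" using fun_cong[OF L, of z0] by simp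
    also have "\<dots> = (\<Sum>a\<in>A. b a * ks_gen g (idx a) (x, e))"
      unfolding kb(2)[rule_format] A_def
    proof (intro sum.cong refl arg_cong[where f="\<lambda>t. b _ * t"])
      fix a :: "'p option \<Rightarrow> nat"
      show "(\<Prod>v\<in>UNIV. z0 $ v ^ a v * (1 - z0 $ v) ^ (k - a v)) = ks_gen g (idx a) (x, e)"
        unfolding prod_option idx_def ks_gen_def by (simp add: z0_def mult.commute mult.assoc)
    qed
    finally show ?thesis .
  qed
  have "(\<lambda>y. \<Sum>a\<in>A. b a * ks_gen g (idx a) y) \<in> (HK g D :: ((real^'n) \<times> (real^'m) \<Rightarrow> real) set)"
    by (intro HK_sum HK_single deg) (auto simp: A_def kb(1) intro: finite_PiE)
  moreover have "(\<lambda>y. Q (fst y) (snd y $ j)) = (\<lambda>y. \<Sum>a\<in>A. b a * ks_gen g (idx a) y)"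
    using rep by auto
  ultimately show ?thesis by auto
qed

lemma HK_const: "0 \<le> c \<Longrightarrow> (\<lambda>y. c) \<in> (HK g k :: ((real^'n::finite) \<times> (real^'m::finite) \<Rightarrow> real) set)"
proof -
  assume c: "0 \<le> c"
  have "(\<lambda>y. c * ks_gen g (undefined::'m, \<lambda>_. 0, 0, \<lambda>_. 0, 0) y) \<in> (HK g k :: ((real^'n) \<times> (real^'m) \<Rightarrow> real) set)"
    by (rule HK_single) (auto simp: ks_deg_def c)
  then show ?thesis by (simp add: ks_gen_def)
qed

lemma HK_u: "(\<lambda>y. 1/2 + snd y $ j / 2) \<in> HK g 1"
proof -
  have "(\<lambda>y. 1 * ks_gen g (j, \<lambda>_. 0, 1, \<lambda>_. 0, 0) y) \<in> HK g 1"
    by (rule HK_single) (auto simp: ks_deg_def)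
  then show ?thesis by (simp add: ks_gen_def)
qed

lemma HK_1u: "(\<lambda>y. 1 - (1/2 + snd y $ j / 2)) \<in> HK g 1"
proof -
  have "(\<lambda>y. 1 * ks_gen g (j, \<lambda>_. 0, 0, \<lambda>_. 0, 1) y) \<in> HK g 1"
    by (rule HK_single) (auto simp: ks_deg_def)
  then show ?thesis by (simp add: ks_gen_def)
qed

lemma HK_1g: "(\<lambda>y. 1 - g i (fst y)) \<in> (HK g 1 :: ((real^'n::finite) \<times> (real^'m::finite) \<Rightarrow> real) set)"
proof -
  have "(\<lambda>y. 1 * ks_gen g (undefined::'m, \<lambda>_. 0, 0, \<lambda>i'. if i' = i then 1 else 0, 0) y) \<in> (HK g 1 :: ((real^'n) \<times> (real^'m) \<Rightarrow> real) set)"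
    by (rule HK_single) (auto simp: ks_deg_def)
  moreover have "ks_gen g (undefined::'m, \<lambda>_. 0, 0, \<lambda>i'. if i' = i then 1 else 0, 0) y = 1 - g i (fst y)" for y
  proof -
    have "ks_gen g (undefined::'m, \<lambda>_. 0, 0, \<lambda>i'. if i' = i then 1 else 0, 0) y
        = (\<Prod>i'\<in>UNIV. if i' = i then 1 - g i' (fst y) else 1)"
      unfolding ks_gen_def by (simp add: if_distrib cong: if_cong)
    also have "\<dots> = 1 - g i (fst y)" by (subst prod.delta) auto
    finally show ?thesis .
  qed
  ultimately show ?thesis by simp
qed

lemma ks_gen_bump:
  "ks_gen g (j, \<alpha>(i := Suc (\<alpha> i)), a0, \<beta>, b0) y = g i (fst y) * ks_gen g (j, \<alpha>, a0, \<beta>, b0) y"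
proof -
  let ?f = "\<lambda>\<alpha>' v. g v (fst y) ^ \<alpha>' v * (1 - g v (fst y)) ^ \<beta> v"
  have "(\<Prod>v\<in>UNIV. ?f (\<alpha>(i := Suc (\<alpha> i))) v) = ?f (\<alpha>(i := Suc (\<alpha> i))) i * (\<Prod>v\<in>UNIV - {i}. ?f (\<alpha>(i := Suc (\<alpha> i))) v)"
    by (subst prod.remove[of _ i]) auto
  also have "(\<Prod>v\<in>UNIV - {i}. ?f (\<alpha>(i := Suc (\<alpha> i))) v) = (\<Prod>v\<in>UNIV - {i}. ?f \<alpha> v)"
    by (intro prod.cong) auto
  also have "?f (\<alpha>(i := Suc (\<alpha> i))) i = g i (fst y) * ?f \<alpha> i" by simp
  also have "g i (fst y) * ?f \<alpha> i * (\<Prod>v\<in>UNIV - {i}. ?f \<alpha> v) = g i (fst y) * (\<Prod>v\<in>UNIV. ?f \<alpha> v)"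
    by (subst (2) prod.remove[of _ i]) auto
  finally show ?thesis unfolding ks_gen_def by (simp add: mult.assoc)
qed

lemma ks_deg_bump:
  "ks_deg (j, \<alpha>(i := Suc (\<alpha> i)), a0, \<beta>, b0) = Suc (ks_deg (j, \<alpha>, a0, \<beta>, b0))"
proof -
  have "(\<Sum>v\<in>UNIV. (\<alpha>(i := Suc (\<alpha> i))) v) = (\<alpha>(i := Suc (\<alpha> i))) i + (\<Sum>v\<in>UNIV - {i}. (\<alpha>(i := Suc (\<alpha> i))) v)"
    by (subst sum.remove[of _ i]) auto
  also have "(\<Sum>v\<in>UNIV - {i}. (\<alpha>(i := Suc (\<alpha> i))) v) = (\<Sum>v\<in>UNIV - {i}. \<alpha> v)"
    by (intro sum.cong) auto
  also have "(\<alpha>(i := Suc (\<alpha> i))) i + (\<Sum>v\<in>UNIV - {i}. \<alpha> v) = Suc (\<Sum>v\<in>UNIV. \<alpha> v)"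
    by (subst (2) sum.remove[of _ i]) auto
  finally show ?thesis unfolding ks_deg_def by simp
qed

definition bump :: "'p \<Rightarrow> ('m, 'p) ks_index \<Rightarrow> ('m, 'p) ks_index" where
  "bump i s = (case s of (j, \<alpha>, a0, \<beta>, b0) \<Rightarrow> (j, \<alpha>(i := Suc (\<alpha> i)), a0, \<beta>, b0))"

lemma HK_gmul:
  assumes "F \<in> HK g k"
  shows "(\<lambda>y. g i (fst y) * F y) \<in> HK g (Suc k)"
proof -
  obtain S c where 1: "finite S" "\<And>s. s \<in> S \<Longrightarrow> ks_deg s \<le> k \<and> 0 \<le> c s" "F = (\<lambda>y. \<Sum>s\<in>S. c s * ks_gen g s y)"
    by (rule HK_memE[OF assms]) blast
  have gb: "ks_gen g (bump i s) y = g i (fst y) * ks_gen g s y" for s y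
    by (cases s) (simp add: bump_def ks_gen_bump)
  have db: "ks_deg (bump i s) = Suc (ks_deg s)" for s
    by (cases s) (simp add: bump_def ks_deg_bump)
  have "(\<lambda>y. \<Sum>s\<in>S. c s * ks_gen g (bump i s) y) \<in> HK g (Suc k)"
  proof (intro HK_sum HK_single 1(1))
    fix s assume "s \<in> S"
    then show "ks_deg (bump i s) \<le> Suc k" "0 \<le> c s" using 1(2)[of s] db[of s] by simp_all
  qed
  moreover have "(\<lambda>y. g i (fst y) * F y) = (\<lambda>y. \<Sum>s\<in>S. c s * ks_gen g (bump i s) y)"
    unfolding 1(3) gb by (simp add: sum_distrib_left algebra_simps)
  ultimately show ?thesis by simp
qed

context
  fixes g :: "'p::finite \<Rightarrow> real^'n::finite \<Rightarrow> real" and iq :: "'n \<Rightarrow> 'p"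
  assumes iq: "\<And>q. g (iq q) = (\<lambda>x. x $ q)"
begin

lemma HK_xmul: "F \<in> HK g k \<Longrightarrow> (\<lambda>y. fst y $ q * F y) \<in> HK g (Suc k)"
  using HK_gmul[of F g k "iq q"] iq by simp

lemma HK_xpow:
  "(F :: (real^'n) \<times> (real^'m::finite) \<Rightarrow> real) \<in> HK g k \<Longrightarrow> (\<lambda>y. (fst y $ q) ^ n * F y) \<in> HK g (k + n)"
proof (induction n)
  case 0 then show ?case by simp
next
  case (Suc n)
  then have "(\<lambda>y. fst y $ q * ((fst y $ q) ^ n * F y)) \<in> HK g (Suc (k + n))" by (intro HK_xmul) auto
  then show ?case by (simp add: mult.assoc)
qed

lemma HK_mon:
  assumes "finite Qs" "(F :: (real^'n) \<times> (real^'m::finite) \<Rightarrow> real) \<in> HK g k"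
  shows "(\<lambda>y. (\<Prod>q\<in>Qs. (fst y $ q) ^ a q) * F y) \<in> HK g (k + (\<Sum>q\<in>Qs. a q))"
  using assms(1)
proof (induction Qs rule: finite_induct)
  case empty then show ?case using assms(2) by simp
next
  case (insert q Qs)
  have "(\<lambda>y. (fst y $ q) ^ a q * ((\<Prod>q\<in>Qs. (fst y $ q) ^ a q) * F y)) \<in> HK g (k + (\<Sum>q\<in>Qs. a q) + a q)"
    by (rule HK_xpow[OF insert(3)])
  then show ?case using insert(1,2) by (simp add: mult.assoc add.commute add.left_commute)
qed

lemma HK_1x:
  assumes "(\<lambda>y. 1 - G y) \<in> (HK g k :: ((real^'n) \<times> (real^'m::finite) \<Rightarrow> real) set)"
  shows "(\<lambda>y. 1 - fst y $ q * G y) \<in> HK g (Suc k)"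
proof -
  have "(\<lambda>y. 1 - g (iq q) (fst y)) \<in> (HK g (Suc k) :: ((real^'n) \<times> (real^'m) \<Rightarrow> real) set)"
    by (rule HK_mono[OF _ HK_1g]) simp
  then have a: "(\<lambda>y. 1 - fst y $ q) \<in> (HK g (Suc k) :: ((real^'n) \<times> (real^'m) \<Rightarrow> real) set)" using iq by simp
  have b: "(\<lambda>y. fst y $ q * (1 - G y)) \<in> HK g (Suc k)" by (rule HK_xmul[OF assms])
  have "(\<lambda>y. (1 - fst y $ q) + fst y $ q * (1 - G y)) \<in> HK g (Suc k)" by (rule HK_add[OF a b])
  then show ?thesis by (simp add: algebra_simps)
qed

lemma HK_1xpow:
  assumes "(\<lambda>y. 1 - G y) \<in> (HK g k :: ((real^'n) \<times> (real^'m::finite) \<Rightarrow> real) set)"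
  shows "(\<lambda>y. 1 - (fst y $ q) ^ n * G y) \<in> HK g (k + n)"
proof (induction n)
  case 0 then show ?case using assms by simp
next
  case (Suc n)
  then have "(\<lambda>y. 1 - fst y $ q * ((fst y $ q) ^ n * G y)) \<in> (HK g (Suc (k + n)) :: ((real^'n) \<times> (real^'m) \<Rightarrow> real) set)"
    by (intro HK_1x) auto
  then show ?case by (simp add: mult.assoc)
qed

lemma HK_1mon:
  assumes "finite Qs"
  shows "(\<lambda>y. 1 - (\<Prod>q\<in>Qs. (fst y $ q) ^ a q)) \<in> (HK g (\<Sum>q\<in>Qs. a q) :: ((real^'n) \<times> (real^'m::finite) \<Rightarrow> real) set)"
  using assms
proof (induction Qs rule: finite_induct)
  case empty then show ?case using HK_zero by simp
next
  case (insert q Qs)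
  have "(\<lambda>y. 1 - (fst y $ q) ^ a q * (\<Prod>q\<in>Qs. (fst y $ q) ^ a q)) \<in> (HK g ((\<Sum>q\<in>Qs. a q) + a q) :: ((real^'n) \<times> (real^'m) \<Rightarrow> real) set)"
    by (rule HK_1xpow[OF insert(3)])
  then show ?case using insert(1,2) by (simp add: add.commute)
qed

lemma lower_nonempty:
  fixes s :: "'m::finite \<Rightarrow> real^'n \<Rightarrow> real"
  assumes s_poly: "\<And>j. poly_fun_deg d (s j)"
  shows "\<exists>t. (\<lambda>y. (\<Sum>j\<in>UNIV. s j (fst y) * snd y $ j) - t) \<in> (HK g (d + 1) :: ((real^'n) \<times> (real^'m) \<Rightarrow> real) set)"
proof -
  have "\<forall>j. \<exists>c. finite {a. c a \<noteq> 0} \<and> (\<forall>a. c a \<noteq> 0 \<longrightarrow> (\<Sum>i\<in>UNIV. a i) \<le> d) \<and> s j = mpoly_eval c"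
    using s_poly unfolding poly_fun_deg_def by blast
  then obtain C where C: "\<And>j. finite {a. C j a \<noteq> 0}" "\<And>j a. C j a \<noteq> 0 \<Longrightarrow> (\<Sum>i\<in>UNIV. a i) \<le> d"
    "\<And>j. s j = mpoly_eval (C j)" by metis
  define Sj where "Sj j = {a. C j a \<noteq> 0}" for j
  define mon where "mon a x = (\<Prod>q\<in>UNIV. (x $ q) ^ a q)" for a :: "'n \<Rightarrow> nat" and x :: "real^'n"
  define w where "w j a y = (if 0 \<le> C j a then 1/2 + snd y $ j / 2 else 1 - (1/2 + snd y $ j / 2))"
    for j a and y :: "(real^'n) \<times> (real^'m)"
  define t where "t = - (\<Sum>j\<in>UNIV. \<Sum>a\<in>Sj j. \<bar>C j a\<bar>)"
  define T where "T j a y = 2 * \<bar>C j a\<bar> * (mon a (fst y) * w j a y) + \<bar>C j a\<bar> * (1 - mon a (fst y))"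
    for j a y
  have trm: "C j a * mon a (fst y) * snd y $ j + \<bar>C j a\<bar> = T j a y" for j a y
    unfolding T_def w_def by (cases "0 \<le> C j a") (simp_all add: algebra_simps)
  have THK: "(\<lambda>y. T j a y) \<in> (HK g (d + 1) :: ((real^'n) \<times> (real^'m) \<Rightarrow> real) set)" if a: "a \<in> Sj j" for j a
  proof -
    have dg: "(\<Sum>q\<in>UNIV. a q) \<le> d" using C(2) a by (auto simp: Sj_def)
    have wH: "(\<lambda>y. w j a y) \<in> (HK g 1 :: ((real^'n) \<times> (real^'m) \<Rightarrow> real) set)"
      unfolding w_def by (cases "0 \<le> C j a") (use HK_u[of j g] HK_1u[of j g] in simp_all)
    have 1: "(\<lambda>y. mon a (fst y) * w j a y) \<in> (HK g (d + 1) :: ((real^'n) \<times> (real^'m) \<Rightarrow> real) set)"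
      unfolding mon_def by (rule HK_mono[OF _ HK_mon[OF _ wH]]) (use dg in auto)
    have 2: "(\<lambda>y. 1 - mon a (fst y)) \<in> (HK g (d + 1) :: ((real^'n) \<times> (real^'m) \<Rightarrow> real) set)"
      unfolding mon_def by (rule HK_mono[OF _ HK_1mon]) (use dg in auto)
    show ?thesis unfolding T_def
      by (intro HK_add HK_scale 1 2) auto
  qed
  have "(\<lambda>y. \<Sum>j\<in>UNIV. \<Sum>a\<in>Sj j. T j a y) \<in> (HK g (d + 1) :: ((real^'n) \<times> (real^'m) \<Rightarrow> real) set)"
    by (intro HK_sum THK) (auto simp: Sj_def C(1))
  moreover have "(\<lambda>y. (\<Sum>j\<in>UNIV. s j (fst y) * snd y $ j) - t) = (\<lambda>y. \<Sum>j\<in>UNIV. \<Sum>a\<in>Sj j. T j a y)"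
  proof
    fix y :: "(real^'n) \<times> (real^'m)"
    have sj: "s j (fst y) = (\<Sum>a\<in>Sj j. C j a * mon a (fst y))" for j
      unfolding C(3) mpoly_eval_def Sj_def mon_def ..
    have "(\<Sum>j\<in>UNIV. s j (fst y) * snd y $ j) - t
        = (\<Sum>j\<in>UNIV. \<Sum>a\<in>Sj j. C j a * mon a (fst y) * snd y $ j + \<bar>C j a\<bar>)"
      unfolding t_def sj by (simp add: sum_distrib_right sum.distrib)
    also have "\<dots> = (\<Sum>j\<in>UNIV. \<Sum>a\<in>Sj j. T j a y)" by (simp add: trm)
    finally show "(\<Sum>j\<in>UNIV. s j (fst y) * snd y $ j) - t = (\<Sum>j\<in>UNIV. \<Sum>a\<in>Sj j. T j a y)" .
  qed
  ultimately show ?thesis by (intro exI[of _ t]) simp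
qed

end

lemma approx_lower:
  fixes g :: "'p::finite \<Rightarrow> real^'n::finite \<Rightarrow> real" and iq :: "'n \<Rightarrow> 'p"
    and s :: "'m::finite \<Rightarrow> real^'n \<Rightarrow> real"
  assumes gpf: "\<And>i. pf (g i)" and iq: "\<And>q. g (iq q) = (\<lambda>x. x $ q)"
    and spf: "\<And>j. pf (s j)"
    and X_def: "X = {x. \<forall>i. 0 \<le> g i x \<and> g i x \<le> 1}"
    and Xc: "compact X"
    and bound: "\<And>x. x \<in> X \<Longrightarrow> (\<Sum>j\<in>UNIV. \<bar>s j x\<bar>) \<le> B"
    and dpos: "0 < \<delta>"
  shows "\<exists>k. (\<lambda>y. (\<Sum>j\<in>UNIV. s j (fst y) * snd y $ j) + (B + \<delta>)) \<in> (HK g k :: ((real^'n) \<times> (real^'m) \<Rightarrow> real) set)"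
proof -
  define m where "m = real CARD('m)"
  have mpos: "0 < m" by (simp add: m_def)
  define d' where "d' = \<delta> / (3 * m)"
  have d'pos: "0 < d'" using mpos dpos by (simp add: d'_def)
  have "\<exists>h. real_polynomial_function h \<and> (\<forall>u\<in>s j ` X. \<bar>\<bar>u\<bar> - h u\<bar> < d')" for j
  proof -
    have "compact (s j ` X)"
      by (intro compact_continuous_image continuous_on_subset[OF pf_continuous[OF spf]] Xc) auto
    moreover have "continuous_on (s j ` X) abs" by (intro continuous_intros)
    ultimately obtain h where "real_polynomial_function h" "\<And>u. u \<in> s j ` X \<Longrightarrow> \<bar>\<bar>u\<bar> - h u\<bar> < d'"
      using Stone_Weierstrass_real_polynomial_function[of "s j ` X" abs d'] d'pos by blast
    then show ?thesis by blast
  qed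
  then obtain H where H: "\<And>j. real_polynomial_function (H j)" "\<And>j u. u \<in> s j ` X \<Longrightarrow> \<bar>\<bar>u\<bar> - H j u\<bar> < d'"
    by metis
  define c where "c j x = H j (s j x) + 2 * d'" for j x
  have cb: "\<bar>s j x\<bar> + d' \<le> c j x \<and> c j x \<le> \<bar>s j x\<bar> + 3 * d'" if "x \<in> X" for j x
    using H(2)[of "s j x" j] that unfolding c_def by auto
  define j0 :: 'm where "j0 = undefined"
  define Q where "Q j x e = s j x * e + c j x + (if j = j0 then (B + \<delta>) - (\<Sum>j'\<in>UNIV. c j' x) else 0)"
    for j x and e :: real
  define Xz where "Xz z = (\<chi> q. z $ Some (iq q))" for z :: "real^('p option)"
  have ps: "pf (\<lambda>z. s j (Xz z))" for j
    by (rule pf_compose[OF spf]) (simp add: Xz_def pf_var)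
  have pc: "pf (\<lambda>z. c j (Xz z))" for j
    unfolding c_def by (intro pf_add pf_const rpf_compose[OF H(1)] ps)
  have "\<exists>k. (\<lambda>y. Q j (fst y) (snd y $ j)) \<in> (HK g k :: ((real^'n) \<times> (real^'m) \<Rightarrow> real) set)" for j
  proof (rule KS[of g iq "Q j" j, OF gpf iq])
    have pe: "pf (\<lambda>z::real^('p option). 2 * z $ None - 1)" by (intro pf_diff pf_mult pf_const pf_var)
    show "pf (\<lambda>z::real^('p option). Q j (\<chi> q. z $ Some (iq q)) (2 * z $ None - 1))"
    proof (cases "j = j0")
      case True
      show ?thesis unfolding Q_def Xz_def[symmetric] using True
        by (simp, intro pf_add pf_mult pf_diff pf_const ps pc pe pf_sum)
    next
      case False
      show ?thesis unfolding Q_def Xz_def[symmetric] using False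
        by (simp, intro pf_add pf_mult ps pc pe)
    qed
  next
    fix x and e :: real
    assume gx: "\<forall>i. 0 \<le> g i x \<and> g i x \<le> 1" and e: "-1 \<le> e" "e \<le> 1"
    have xX: "x \<in> X" using gx X_def by simp
    have se: "- \<bar>s j x\<bar> \<le> s j x * e"
    proof -
      have "\<bar>s j x * e\<bar> \<le> \<bar>s j x\<bar> * 1" unfolding abs_mult by (rule mult_left_mono) (use e in auto)
      then show ?thesis by linarith
    qed
    have sl: "0 \<le> (if j = j0 then (B + \<delta>) - (\<Sum>j'\<in>UNIV. c j' x) else 0)"
    proof -
      have "(\<Sum>j'\<in>UNIV. c j' x) \<le> (\<Sum>j'\<in>UNIV. \<bar>s j' x\<bar> + 3 * d')"
        by (intro sum_mono) (use cb[OF xX] in blast)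
      also have "\<dots> = (\<Sum>j'\<in>UNIV. \<bar>s j' x\<bar>) + \<delta>"
        using mpos by (simp add: sum.distrib d'_def m_def)
      also have "\<dots> \<le> B + \<delta>" using bound[OF xX] by simp
      finally show ?thesis by simp
    qed
    show "0 < Q j x e" unfolding Q_def using se sl cb[OF xX, of j] d'pos by linarith
  qed
  then obtain kf where kf: "\<And>j. (\<lambda>y. Q j (fst y) (snd y $ j)) \<in> (HK g (kf j) :: ((real^'n) \<times> (real^'m) \<Rightarrow> real) set)"
    by metis
  define k0 where "k0 = (\<Sum>j\<in>UNIV. kf j)"
  have "(\<lambda>y. \<Sum>j\<in>UNIV. Q j (fst y) (snd y $ j)) \<in> (HK g k0 :: ((real^'n) \<times> (real^'m) \<Rightarrow> real) set)"
  proof (intro HK_sum)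
    fix j :: 'm
    show "(\<lambda>y. Q j (fst y) (snd y $ j)) \<in> HK g k0"
      by (rule HK_mono[OF _ kf]) (unfold k0_def, rule member_le_sum, auto)
  qed simp
  moreover have "(\<Sum>j\<in>UNIV. Q j (fst y) (snd y $ j)) = (\<Sum>j\<in>UNIV. s j (fst y) * snd y $ j) + (B + \<delta>)" for y :: "(real^'n) \<times> (real^'m)"
  proof -
    have "(\<Sum>j\<in>UNIV. Q j (fst y) (snd y $ j)) = (\<Sum>j\<in>UNIV. s j (fst y) * snd y $ j) + (\<Sum>j\<in>UNIV. c j (fst y))
        + (\<Sum>j\<in>UNIV. if j = j0 then (B + \<delta>) - (\<Sum>j'\<in>UNIV. c j' (fst y)) else 0)"
      unfolding Q_def by (simp add: sum.distrib)
    also have "(\<Sum>j\<in>UNIV. if j = j0 then (B + \<delta>) - (\<Sum>j'\<in>UNIV. c j' (fst y)) else 0) = (B + \<delta>) - (\<Sum>j'\<in>UNIV. c j' (fst y))"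
      by simp
    finally show ?thesis by simp
  qed
  ultimately show ?thesis by (intro exI[of _ k0]) simp
qed

lemma lower_main:
  fixes g :: "'p::finite \<Rightarrow> real^'n::finite \<Rightarrow> real"
    and s :: "'m::finite \<Rightarrow> real^'n \<Rightarrow> real"
    and d :: nat
    and X :: "(real^'n) set"
    and K :: "((real^'n) \<times> (real^'m)) set"
    and l' :: "(real^'n) \<times> (real^'m) \<Rightarrow> real"
    and lower :: "nat \<Rightarrow> real"
  assumes g_poly: "\<And>i. poly_fun (g i)"
    and coords: "\<And>q. \<exists>i. g i = (\<lambda>x. x $ q)"
    and X_def: "X = {x. \<forall>i. 0 \<le> g i x \<and> g i x \<le> 1}"
    and X_ne: "X \<noteq> {}"
    and s_poly: "\<And>j. poly_fun_deg d (s j)"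
    and l'_def: "l' = (\<lambda>(x, e). \<Sum>j\<in>UNIV. s j x * e $ j)"
    and K_def: "K = {(x, e). x \<in> X \<and> (\<forall>j. -1 \<le> e $ j \<and> e $ j \<le> 1)}"
    and lower_def: "lower = (\<lambda>k. Sup {t. (\<lambda>y. l' y - t) \<in> HK g k})"
  shows "(\<forall>k\<ge>d+1. lower k \<le> lower (Suc k)) \<and> lower \<longlonglongrightarrow> Inf (l' ` K)
     \<and> compact (l' ` K) \<and> l' ` K \<noteq> {}"
proof -
  obtain iq where iq: "\<And>q. g (iq q) = (\<lambda>x. x $ q)" using coords by metis
  have gpf: "pf (g i)" for i using g_poly poly_fun_pf by blast
  have spf: "pf (s j)" for j using s_poly poly_fun_deg_pf by blast
  have l'eq: "l' y = (\<Sum>j\<in>UNIV. s j (fst y) * snd y $ j)" for y by (cases y) (simp add: l'_def)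
  have xb: "0 \<le> x $ q \<and> x $ q \<le> 1" if "x \<in> X" for x q
    using that iq[of q] unfolding X_def by (metis (mono_tags, lifting) mem_Collect_eq)
  have Xclosed: "closed X" unfolding X_def
    by (intro closed_Collect_all closed_Collect_conj closed_Collect_le continuous_on_const pf_continuous gpf)
  have Xsub: "X \<subseteq> cbox 0 1" using xb by (auto simp: mem_box_cart)
  have Xc: "compact X"
  proof -
    have "compact (cbox 0 1 \<inter> X)" by (intro compact_Int_closed compact_cbox Xclosed)
    moreover have "cbox 0 1 \<inter> X = X" using Xsub by blast
    ultimately show ?thesis by simp
  qed
  have KX: "K = X \<times> cbox (-1) 1" by (auto simp: K_def mem_box_cart)
  have Kc: "compact K" unfolding KX by (intro compact_Times Xc compact_cbox)
  have Kne: "K \<noteq> {}"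
  proof -
    obtain x where "x \<in> X" using X_ne by blast
    then have "(x, 0) \<in> K" by (simp add: K_def)
    then show ?thesis by blast
  qed
  have cs: "continuous_on UNIV (\<lambda>y::(real^'n) \<times> (real^'m). s j (fst y))" for j
    by (rule continuous_on_compose2[OF pf_continuous[OF spf] continuous_on_fst]) auto
  have cl: "continuous_on UNIV l'"
  proof -
    have "continuous_on UNIV (\<lambda>y::(real^'n) \<times> (real^'m). \<Sum>j\<in>UNIV. s j (fst y) * snd y $ j)"
      by (intro continuous_on_sum continuous_on_mult cs continuous_intros)
    moreover have "l' = (\<lambda>y. \<Sum>j\<in>UNIV. s j (fst y) * snd y $ j)" using l'eq by auto
    ultimately show ?thesis by simp
  qed
  have cA: "compact (l' ` K)" by (intro compact_continuous_image continuous_on_subset[OF cl] Kc) auto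
  have Ane: "l' ` K \<noteq> {}" using Kne by simp
  have bdd: "bdd_below (l' ` K)" using cA by (simp add: compact_imp_bounded bounded_imp_bdd_below)
  define I where "I = Inf (l' ` K)"
  have Ile: "I \<le> l' y" if "y \<in> K" for y unfolding I_def by (rule cInf_lower[OF imageI[OF that] bdd])
  have bound: "(\<Sum>j\<in>UNIV. \<bar>s j x\<bar>) \<le> - I" if xX: "x \<in> X" for x
  proof -
    define e :: "real^'m" where "e = (\<chi> j. if 0 \<le> s j x then -1 else 1)"
    have "(x, e) \<in> K" using xX by (simp add: K_def e_def)
    then have "I \<le> l' (x, e)" by (rule Ile)
    also have "l' (x, e) = - (\<Sum>j\<in>UNIV. \<bar>s j x\<bar>)"
      unfolding l'_def sum_negf[symmetric] by (auto simp: e_def intro!: sum.cong)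
    finally show ?thesis by simp
  qed
  define T where "T k = {t. (\<lambda>y. l' y - t) \<in> HK g k}" for k
  have lowerT: "lower k = Sup (T k)" for k by (simp add: lower_def T_def)
  have Tle: "t \<le> I" if "t \<in> T k" for t k
  proof -
    have "t \<le> v" if "v \<in> l' ` K" for v
    proof -
      obtain x e where xe: "(x, e) \<in> K" "v = l' (x, e)" using \<open>v \<in> l' ` K\<close> by auto
      have "\<forall>i. 0 \<le> g i x \<and> g i x \<le> 1" "\<forall>j. -1 \<le> e $ j \<and> e $ j \<le> 1"
        using xe(1) by (auto simp: K_def X_def)
      then have "0 \<le> (\<lambda>y. l' y - t) (x, e)" using \<open>t \<in> T k\<close> HK_nonneg unfolding T_def by blast
      then show ?thesis using xe by simp
    qed
    then show ?thesis unfolding I_def by (intro cInf_greatest Ane) auto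
  qed
  have Tbdd: "bdd_above (T k)" for k unfolding bdd_above_def using Tle by blast
  have Tmono: "T k \<subseteq> T k'" if "k \<le> k'" for k k' using HK_mono[OF that] unfolding T_def by auto
  obtain t0 where t0: "t0 \<in> T (d + 1)"
  proof -
    obtain t where "(\<lambda>y. (\<Sum>j\<in>UNIV. s j (fst y) * snd y $ j) - t) \<in> (HK g (d + 1) :: ((real^'n) \<times> (real^'m) \<Rightarrow> real) set)"
      using lower_nonempty[of g iq d s, OF iq s_poly] by blast
    moreover have "(\<lambda>y. l' y - t) = (\<lambda>y. (\<Sum>j\<in>UNIV. s j (fst y) * snd y $ j) - t)" using l'eq by auto
    ultimately have "t \<in> T (d + 1)" unfolding T_def by simp
    then show ?thesis using that by blast
  qed
  have approx: "\<exists>k. I - \<delta> \<in> T k" if dpos: "0 < \<delta>" for \<delta>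
  proof -
    obtain k where k: "(\<lambda>y. (\<Sum>j\<in>UNIV. s j (fst y) * snd y $ j) + (- I + \<delta>)) \<in> (HK g k :: ((real^'n) \<times> (real^'m) \<Rightarrow> real) set)"
      using approx_lower[of g iq s X "- I" \<delta>, OF gpf iq spf X_def Xc bound dpos] by blast
    moreover have "(\<lambda>y. l' y - (I - \<delta>)) = (\<lambda>y. (\<Sum>j\<in>UNIV. s j (fst y) * snd y $ j) + (- I + \<delta>))"
      using l'eq by auto
    ultimately show ?thesis unfolding T_def by auto
  qed
  have mono: "\<forall>k\<ge>d+1. lower k \<le> lower (Suc k)"
  proof (intro allI impI)
    fix k assume k: "d + 1 \<le> k"
    have "T k \<noteq> {}" using t0 Tmono[OF k] by blast
    then show "lower k \<le> lower (Suc k)" unfolding lowerT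
      by (rule cSup_subset_mono[OF _ Tbdd Tmono]) simp
  qed
  have lim: "lower \<longlonglongrightarrow> I"
  proof (rule LIMSEQ_I)
    fix r :: real assume r: "0 < r"
    obtain k0 where k0: "I - r / 2 \<in> T k0" using approx[of "r / 2"] r by auto
    have "norm (lower n - I) < r" if n: "n \<ge> k0" for n
    proof -
      have tn: "I - r / 2 \<in> T n" using Tmono[OF n] k0 by blast
      have "I - r / 2 \<le> lower n" unfolding lowerT by (rule cSup_upper[OF tn Tbdd])
      moreover have "lower n \<le> I" unfolding lowerT by (rule cSup_least) (use tn Tle in auto)
      ultimately show ?thesis using r by simp
    qed
    then show "\<exists>no. \<forall>n\<ge>no. norm (lower n - I) < r" by blast
  qed
  show ?thesis using mono lim cA Ane unfolding I_def by blast
qed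

lemma scale_inf_sup:
  fixes A :: "real set"
  assumes "compact A" "A \<noteq> {}" "0 < c"
  shows "Inf ((\<lambda>v. c * v) ` A) = c * Inf A" "Sup ((\<lambda>v. c * v) ` A) = c * Sup A"
proof -
  obtain a0 where a0: "a0 \<in> A" "\<forall>t\<in>A. a0 \<le> t" using compact_attains_inf[OF assms(1,2)] by blast
  obtain a1 where a1: "a1 \<in> A" "\<forall>t\<in>A. t \<le> a1" using compact_attains_sup[OF assms(1,2)] by blast
  have "Inf A = a0" by (rule cInf_eq_minimum) (use a0 in auto)
  moreover have "Inf ((\<lambda>v. c * v) ` A) = c * a0"
  proof (rule cInf_eq_minimum)
    show "c * a0 \<in> (\<lambda>v. c * v) ` A" using a0 by blast
    fix x assume "x \<in> (\<lambda>v. c * v) ` A"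
    then obtain t where "t \<in> A" "x = c * t" by blast
    then show "c * a0 \<le> x" using a0(2) assms(3) by (simp add: mult_left_mono)
  qed
  ultimately show "Inf ((\<lambda>v. c * v) ` A) = c * Inf A" by simp
  have "Sup A = a1" by (rule cSup_eq_maximum) (use a1 in auto)
  moreover have "Sup ((\<lambda>v. c * v) ` A) = c * a1"
  proof (rule cSup_eq_maximum)
    show "c * a1 \<in> (\<lambda>v. c * v) ` A" using a1 by blast
    fix x assume "x \<in> (\<lambda>v. c * v) ` A"
    then obtain t where "t \<in> A" "x = c * t" by blast
    then show "x \<le> c * a1" using a1(2) assms(3) by (simp add: mult_left_mono)
  qed
  ultimately show "Sup ((\<lambda>v. c * v) ` A) = c * Sup A" by simp
qed

theorem proposition3:
  fixes g :: "'p::finite \<Rightarrow> real^'n::finite \<Rightarrow> real"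
    and s :: "'m::finite \<Rightarrow> real^'n \<Rightarrow> real"
    and d :: nat
    and X :: "(real^'n) set"
    and K :: "((real^'n) \<times> (real^'m)) set"
    and l' :: "(real^'n) \<times> (real^'m) \<Rightarrow> real"
    and lower upper :: "nat \<Rightarrow> real"
  assumes g_poly: "\<And>i. poly_fun (g i)"
    and coords: "\<And>q. \<exists>i. g i = (\<lambda>x. x $ q)"
    and X_def: "X = {x. \<forall>i. 0 \<le> g i x \<and> g i x \<le> 1}"
    and X_ne: "X \<noteq> {}"
    and s_poly: "\<And>j. poly_fun_deg d (s j)"
    and l'_def: "l' = (\<lambda>(x, e). \<Sum>j\<in>UNIV. s j x * e $ j)"
    and K_def: "K = {(x, e). x \<in> X \<and> (\<forall>j. -1 \<le> e $ j \<and> e $ j \<le> 1)}"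
    and lower_def: "lower = (\<lambda>k. Sup {t. (\<lambda>y. l' y - t) \<in> HK g k})"
    and upper_def: "upper = (\<lambda>k. Inf {t. (\<lambda>y. t - l' y) \<in> HK g k})"
  shows "(\<forall>k\<ge>d+1. lower k \<le> lower (Suc k)) \<and> lower \<longlonglongrightarrow> Inf (l' ` K)
       \<and> (\<forall>k\<ge>d+1. upper (Suc k) \<le> upper k) \<and> upper \<longlonglongrightarrow> Sup (l' ` K)
       \<and> (\<forall>\<epsilon>>0. (\<lambda>k. \<epsilon> * lower k) \<longlonglongrightarrow>
                    Inf ((\<lambda>(x, e). \<Sum>j\<in>UNIV. s j x * e $ j) `
                         {(x, e). x \<in> X \<and> (\<forall>j. -\<epsilon> \<le> e $ j \<and> e $ j \<le> \<epsilon>)})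
              \<and> (\<lambda>k. \<epsilon> * upper k) \<longlonglongrightarrow>
                    Sup ((\<lambda>(x, e). \<Sum>j\<in>UNIV. s j x * e $ j) `
                         {(x, e). x \<in> X \<and> (\<forall>j. -\<epsilon> \<le> e $ j \<and> e $ j \<le> \<epsilon>)}))"
proof -
  have L: "(\<forall>k\<ge>d+1. lower k \<le> lower (Suc k)) \<and> lower \<longlonglongrightarrow> Inf (l' ` K)
     \<and> compact (l' ` K) \<and> l' ` K \<noteq> {}"
    by (rule lower_main[OF g_poly coords X_def X_ne s_poly l'_def K_def lower_def])
  define lower' where "lower' = (\<lambda>k. Sup {t. (\<lambda>y. - l' y - t) \<in> HK g k})"
  have s_poly': "poly_fun_deg d (\<lambda>x. - s j x)" for j
  proof -
    obtain c where c: "finite {a. c a \<noteq> 0}" "\<forall>a. c a \<noteq> 0 \<longrightarrow> (\<Sum>i\<in>UNIV. a i) \<le> d" "s j = mpoly_eval c"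
      using s_poly[of j] unfolding poly_fun_deg_def by blast
    have "(\<lambda>x. - s j x) = mpoly_eval (\<lambda>a. - c a)"
      unfolding c(3) mpoly_eval_def by (simp add: sum_negf fun_eq_iff)
    then show ?thesis unfolding poly_fun_deg_def using c(1,2) by (intro exI[of _ "\<lambda>a. - c a"]) auto
  qed
  have l'' : "(\<lambda>y. - l' y) = (\<lambda>(x, e). \<Sum>j\<in>UNIV. (- s j x) * e $ j)"
    unfolding l'_def by (auto simp: sum_negf fun_eq_iff)
  have U: "(\<forall>k\<ge>d+1. lower' k \<le> lower' (Suc k)) \<and> lower' \<longlonglongrightarrow> Inf ((\<lambda>y. - l' y) ` K)
     \<and> compact ((\<lambda>y. - l' y) ` K) \<and> (\<lambda>y. - l' y) ` K \<noteq> {}"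
    by (rule lower_main[OF g_poly coords X_def X_ne s_poly' l'' K_def]) (simp add: lower'_def)
  have upper_eq: "upper k = - lower' k" for k
  proof -
    have "uminus ` {t. (\<lambda>y. t - l' y) \<in> HK g k} = {t. (\<lambda>y. - l' y - t) \<in> HK g k}"
    proof (intro equalityI subsetI)
      fix t assume "t \<in> uminus ` {t. (\<lambda>y. t - l' y) \<in> HK g k}"
      then obtain t' where t': "t' \<in> {t. (\<lambda>y. t - l' y) \<in> HK g k}" "t = - t'" by (rule imageE)
      have m: "(\<lambda>y. t' - l' y) \<in> HK g k" using t'(1) by (simp only: mem_Collect_eq)
      have eq: "(\<lambda>y. - l' y - t) = (\<lambda>y. t' - l' y)"
      proof (rule ext)
        fix y show "- l' y - t = t' - l' y" using t'(2) by linarith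
      qed
      show "t \<in> {t. (\<lambda>y. - l' y - t) \<in> HK g k}" unfolding mem_Collect_eq eq by (rule m)
    next
      fix t assume "t \<in> {t. (\<lambda>y. - l' y - t) \<in> HK g k}"
      then have m: "(\<lambda>y. - l' y - t) \<in> HK g k" by (simp only: mem_Collect_eq)
      have eq: "(\<lambda>y. (- t) - l' y) = (\<lambda>y. - l' y - t)"
      proof (rule ext)
        fix y show "(- t) - l' y = - l' y - t" by linarith
      qed
      have "- t \<in> {t. (\<lambda>y. t - l' y) \<in> HK g k}" unfolding mem_Collect_eq eq by (rule m)
      then show "t \<in> uminus ` {t. (\<lambda>y. t - l' y) \<in> HK g k}" by (rule rev_image_eqI) simp
    qed
    then show ?thesis unfolding upper_def lower'_def Inf_real_def by simp
  qed
  have supI: "Sup (l' ` K) = - Inf ((\<lambda>y. - l' y) ` K)"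
  proof -
    have "(\<lambda>y. - l' y) ` K = uminus ` (l' ` K)" by (simp add: image_image)
    then show ?thesis unfolding Inf_real_def by (simp add: image_image)
  qed
  have upmono: "\<forall>k\<ge>d+1. upper (Suc k) \<le> upper k" using U unfolding upper_eq by simp
  have uplim: "upper \<longlonglongrightarrow> Sup (l' ` K)"
  proof -
    have "(\<lambda>k. - lower' k) \<longlonglongrightarrow> - Inf ((\<lambda>y. - l' y) ` K)" using U by (intro tendsto_minus) simp
    moreover have "upper = (\<lambda>k. - lower' k)" by (rule ext) (rule upper_eq)
    ultimately show ?thesis unfolding supI by simp
  qed
  have eps: "(\<lambda>k. \<epsilon> * lower k) \<longlonglongrightarrow>
                    Inf ((\<lambda>(x, e). \<Sum>j\<in>UNIV. s j x * e $ j) `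
                         {(x, e). x \<in> X \<and> (\<forall>j. -\<epsilon> \<le> e $ j \<and> e $ j \<le> \<epsilon>)})
              \<and> (\<lambda>k. \<epsilon> * upper k) \<longlonglongrightarrow>
                    Sup ((\<lambda>(x, e). \<Sum>j\<in>UNIV. s j x * e $ j) `
                         {(x, e). x \<in> X \<and> (\<forall>j. -\<epsilon> \<le> e $ j \<and> e $ j \<le> \<epsilon>)})" if ep: "0 < \<epsilon>" for \<epsilon> :: real
  proof -
    have img: "(\<lambda>(x, e). \<Sum>j\<in>UNIV. s j x * e $ j) ` {(x, e). x \<in> X \<and> (\<forall>j. -\<epsilon> \<le> e $ j \<and> e $ j \<le> \<epsilon>)}
        = (\<lambda>v. \<epsilon> * v) ` (l' ` K)"
    proof (intro equalityI subsetI)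
      fix v assume "v \<in> (\<lambda>(x, e). \<Sum>j\<in>UNIV. s j x * e $ j) ` {(x, e). x \<in> X \<and> (\<forall>j. -\<epsilon> \<le> e $ j \<and> e $ j \<le> \<epsilon>)}"
      then obtain x e where xe: "x \<in> X" "\<forall>j. -\<epsilon> \<le> e $ j \<and> e $ j \<le> \<epsilon>" "v = (\<Sum>j\<in>UNIV. s j x * e $ j)" by auto
      define e' where "e' = (\<chi> j. e $ j / \<epsilon>)"
      have "(x, e') \<in> K" using xe(1,2) ep by (auto simp: K_def e'_def field_simps)
      moreover have "v = \<epsilon> * l' (x, e')"
        using ep unfolding xe(3) l'_def e'_def by (simp add: sum_distrib_left field_simps)
      ultimately show "v \<in> (\<lambda>v. \<epsilon> * v) ` (l' ` K)" by blast
    next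
      fix v assume "v \<in> (\<lambda>v. \<epsilon> * v) ` (l' ` K)"
      then obtain x e where xe: "x \<in> X" "\<forall>j. -1 \<le> e $ j \<and> e $ j \<le> 1" "v = \<epsilon> * l' (x, e)"
        by (auto simp: K_def)
      define e' where "e' = (\<chi> j. \<epsilon> * e $ j)"
      have "\<forall>j. -\<epsilon> \<le> e' $ j \<and> e' $ j \<le> \<epsilon>"
      proof
        fix j
        have "\<epsilon> * (-1) \<le> \<epsilon> * e $ j" "\<epsilon> * e $ j \<le> \<epsilon> * 1"
          using xe(2) ep by (intro mult_left_mono; simp)+
        then show "-\<epsilon> \<le> e' $ j \<and> e' $ j \<le> \<epsilon>" by (simp add: e'_def)
      qed
      moreover have "v = (\<Sum>j\<in>UNIV. s j x * e' $ j)"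
        unfolding xe(3) l'_def e'_def by (simp add: sum_distrib_left algebra_simps)
      ultimately show "v \<in> (\<lambda>(x, e). \<Sum>j\<in>UNIV. s j x * e $ j) ` {(x, e). x \<in> X \<and> (\<forall>j. -\<epsilon> \<le> e $ j \<and> e $ j \<le> \<epsilon>)}"
        using xe(1) by (intro image_eqI[of _ _ "(x, e')"]) auto
    qed
    have cA: "compact (l' ` K)" "l' ` K \<noteq> {}" using L by auto
    show ?thesis unfolding img scale_inf_sup[OF cA ep]
      using L uplim by (auto intro: tendsto_mult_left)
  qed
  show ?thesis using L upmono uplim eps by blast
qed

end
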